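(* In the blockchain implementation of non-fungible tokens described below, replace the ownership transaction $TxO$ by the royalty-paying transaction $TxOr$. Then the resulting implementation still satisfies the NFT specification $\mathcal N$: for every agent $a$, asset $\alpha$ and time $t$ with $Owns(a,\alpha,t)$, one has $PC(Agent, \tau(Owns(a,\alpha,t)))$, and $Owns$ satisfies the ownership laws (L1)–(L3).
   Context: Agents form a type $Agent$, assets a type $Asset$; time $\mathbb T$ is isomorphic to the natural numbers. $Owns(a,\alpha,t)$ means agent $a$ owns asset $\alpha$ at time $t$. $Asset_\exists$ (time-dependent) is the set of currently existing assets. Ownership laws, required at every time: (L1) every $\alpha\in Asset_\exists$ has some owner; (L2) every $\alpha \in Asset_\exists$ has at most one owner; (L3) no $\alpha \in Asset\setminus Asset_\exists$ has an owner. A token function $\tau$ is an injection from $\{(a,\alpha,t) : Owns(a,\alpha,t)\}$ to bitstrings, with $\tau$ and its inverse common knowledge, so $K_x\,\tau(Owns(a,\alpha,t)) \iff K_x\,Owns(a,\alpha,t)$. $K_x\,\phi$ means agent $x$ knows $\phi$ (only truths are known); $PC(A,\phi) :\iff \forall x,y\in A,\ K_xK_y\,\phi$. Specification $\mathcal N$: $PC(Agent,\tau(Owns(a,\alpha,t)))$ with $Owns$ satisfying (L1)–(L3). Implementation: a blockchain $bc$ maintained by a network $Net$ of nodes each holding a copy of $bc$, with $PC(Net,$ "all nodes are honest and run the $bc$ software"$)$. Each block contains one transaction; appending takes one time unit. $Mint(orig,\alpha,t+1)$: if no agent owns $\alpha$ at any time $u\le t$, append a block containing $\tau(Owns(orig,\alpha,t+1))$;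 otherwise no change. Standard transaction $Tx(b,s,c,t)$ is appended only if buyer $b$'s balance (received minus paid over $bc$) is at least $c$. $TxO(old,new,\alpha,c,t)$: if $Owns(old,\alpha,t)$ and $balance(new)\ge c$, append a block with $\tau(Owns(new,\alpha,t+1))$ concatenated with $Tx(new,old,c,t+1)$. $TxOr$ has the same precondition and ownership token as $TxO$, but its standard-transaction part is $Tx(new,old,c-\%c,t+1)$ concatenated with $Tx(new,orig,\%c,t+1)$, where $\%c$ is the royalty and $orig$ is the originator of $\alpha$, identified as the first owner in the chain-ordered list of agents $a$ with $\tau(Owns(a,\alpha))$ in $bc$. Existing assets are those minted so far. Each agent $x$ uses an e-wallet connected to a node $v_x\in Net$; all agents are honest, and $v_x$ communicates to $x$ the fact $PC(Net,\phi)$ and to $Net$ the fact $K_x\,\phi$, $\phi$ being the ownership information. *)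

theory Defs
  imports Complex_Main
begin

type_synonym bits = "bool list"

text \<open>A standard transaction Tx(b,s,c,t): buyer b pays amount c to seller s at time t.\<close>
datatype 'ag tx = Tx 'ag 'ag real nat

text \<open>Blocks (one transaction per block): a mint block carrying an ownership token,
  a standard-transaction block, or an ownership-transfer block carrying an ownership
  token concatenated with standard transactions.\<close>
datatype 'ag block =
    MintB bits
  | StdB "'ag tx"
  | OwnB bits "'ag tx list"

text \<open>Requests issued at a time step: Mint(orig,alpha), Tx(b,s,c), TxOr(old,new,alpha,c).\<close>
datatype ('ag, 'as) request =
    RMint 'ag 'as
  | RTx 'ag 'ag real
  | RTxOr 'ag 'ag 'as real

fun block_token :: "'ag block \<Rightarrow> bits list" where
  "block_token (MintB bs) = [bs]"
| "block_token (StdB _) = []"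
| "block_token (OwnB bs _) = [bs]"

fun block_txs :: "'ag block \<Rightarrow> 'ag tx list" where
  "block_txs (MintB _) = []"
| "block_txs (StdB t) = [t]"
| "block_txs (OwnB _ ts) = ts"

definition records :: "('ag \<times> 'as \<times> nat \<Rightarrow> bits) \<Rightarrow> 'ag block list \<Rightarrow> ('ag \<times> 'as \<times> nat) list" where
  "records \<tau> bc = map (inv \<tau>) (concat (map block_token bc))"

definition owner_list :: "('ag \<times> 'as \<times> nat \<Rightarrow> bits) \<Rightarrow> 'ag block list \<Rightarrow> 'as \<Rightarrow> 'ag list" where
  "owner_list \<tau> bc \<alpha> = map fst (filter (\<lambda>(a, \<beta>, u). \<beta> = \<alpha>) (records \<tau> bc))"

definition chain_owns :: "('ag \<times> 'as \<times> nat \<Rightarrow> bits) \<Rightarrow> 'ag block list \<Rightarrow> 'ag \<Rightarrow> 'as \<Rightarrow> bool" where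
  "chain_owns \<tau> bc a \<alpha> \<longleftrightarrow> owner_list \<tau> bc \<alpha> \<noteq> [] \<and> last (owner_list \<tau> bc \<alpha>) = a"

definition orig :: "('ag \<times> 'as \<times> nat \<Rightarrow> bits) \<Rightarrow> 'ag block list \<Rightarrow> 'as \<Rightarrow> 'ag" where
  "orig \<tau> bc \<alpha> = hd (owner_list \<tau> bc \<alpha>)"

definition balance :: "'ag block list \<Rightarrow> 'ag \<Rightarrow> real" where
  "balance bc x = sum_list (map (\<lambda>t. case t of Tx b s c u \<Rightarrow>
       (if s = x then c else 0) - (if b = x then c else 0)) (concat (map block_txs bc)))"

definition minted :: "('ag \<times> 'as \<times> nat \<Rightarrow> bits) \<Rightarrow> 'ag block list \<Rightarrow> 'as set" where
  "minted \<tau> bc = {\<alpha>. \<exists>bs a u. MintB bs \<in> set bc \<and> inv \<tau> bs = (a, \<alpha>, u)}"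

text \<open>One time step of the blockchain, with TxO replaced by the royalty-paying TxOr.
  roy c is the royalty %c paid to the originator.\<close>
fun step :: "('ag \<times> 'as \<times> nat \<Rightarrow> bits) \<Rightarrow> (real \<Rightarrow> real) \<Rightarrow> nat \<Rightarrow> 'ag block list
               \<Rightarrow> ('ag, 'as) request option \<Rightarrow> 'ag block list" where
  "step \<tau> roy t bc None = bc"
| "step \<tau> roy t bc (Some (RMint o' \<alpha>)) =
     (if owner_list \<tau> bc \<alpha> = [] then bc @ [MintB (\<tau> (o', \<alpha>, Suc t))] else bc)"
| "step \<tau> roy t bc (Some (RTx b s c)) =
     (if balance bc b \<ge> c then bc @ [StdB (Tx b s c (Suc t))] else bc)"
| "step \<tau> roy t bc (Some (RTxOr old new \<alpha> c)) =
     (if chain_owns \<tau> bc old \<alpha> \<and> balance bc new \<ge> c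
      then bc @ [OwnB (\<tau> (new, \<alpha>, Suc t))
                   [Tx new old (c - roy c) (Suc t), Tx new (orig \<tau> bc \<alpha>) (roy c) (Suc t)]]
      else bc)"

primrec bc_run :: "('ag \<times> 'as \<times> nat \<Rightarrow> bits) \<Rightarrow> (real \<Rightarrow> real) \<Rightarrow> (nat \<Rightarrow> ('ag, 'as) request option)
                     \<Rightarrow> nat \<Rightarrow> 'ag block list" where
  "bc_run \<tau> roy ops 0 = []"
| "bc_run \<tau> roy ops (Suc t) = step \<tau> roy t (bc_run \<tau> roy ops t) (ops t)"

definition Owns :: "('ag \<times> 'as \<times> nat \<Rightarrow> bits) \<Rightarrow> (real \<Rightarrow> real) \<Rightarrow> (nat \<Rightarrow> ('ag, 'as) request option)
                     \<Rightarrow> 'ag \<Rightarrow> 'as \<Rightarrow> nat \<Rightarrow> bool" where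
  "Owns \<tau> roy ops a \<alpha> t \<longleftrightarrow> chain_owns \<tau> (bc_run \<tau> roy ops t) a \<alpha>"

definition Asset_ex :: "('ag \<times> 'as \<times> nat \<Rightarrow> bits) \<Rightarrow> (real \<Rightarrow> real) \<Rightarrow> (nat \<Rightarrow> ('ag, 'as) request option)
                     \<Rightarrow> nat \<Rightarrow> 'as set" where
  "Asset_ex \<tau> roy ops t = minted \<tau> (bc_run \<tau> roy ops t)"

definition ownership_laws :: "('ag \<Rightarrow> 'as \<Rightarrow> nat \<Rightarrow> bool) \<Rightarrow> (nat \<Rightarrow> 'as set) \<Rightarrow> bool" where
  "ownership_laws own ex \<longleftrightarrow> (\<forall>t.
      (\<forall>\<alpha>\<in>ex t. \<exists>a. own a \<alpha> t) \<and>
      (\<forall>\<alpha>\<in>ex t. \<forall>a b. own a \<alpha> t \<and> own b \<alpha> t \<longrightarrow> a = b) \<and>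
      (\<forall>\<alpha>. \<alpha> \<notin> ex t \<longrightarrow> (\<forall>a. \<not> own a \<alpha> t)))"

definition Kn :: "('w \<Rightarrow> 'w \<Rightarrow> bool) \<Rightarrow> 'w set \<Rightarrow> 'w set" where
  "Kn R P = {w. \<forall>w'. R w w' \<longrightarrow> w' \<in> P}"

definition PC :: "('i \<Rightarrow> 'w \<Rightarrow> 'w \<Rightarrow> bool) \<Rightarrow> 'i set \<Rightarrow> 'w set \<Rightarrow> 'w set" where
  "PC R A P = {w. \<forall>x\<in>A. \<forall>y\<in>A. w \<in> Kn (R x) (Kn (R y) P)}"

definition tok_fact :: "('ag \<times> 'as \<times> nat \<Rightarrow> bits) \<Rightarrow> (real \<Rightarrow> real) \<Rightarrow> ('w \<Rightarrow> nat \<Rightarrow> ('ag, 'as) request option)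
                     \<Rightarrow> bits \<Rightarrow> 'w set" where
  "tok_fact \<tau> roy ops bs = {w. case inv \<tau> bs of (a, \<alpha>, t) \<Rightarrow> Owns \<tau> roy (ops w) a \<alpha> t}"

end

theory Submission
  imports Defs
begin

lemma records_app: "records \<tau> (bc @ [b]) = records \<tau> bc @ map (inv \<tau>) (block_token b)"
  by (simp add: records_def)

lemma minted_mono: "minted \<tau> bc \<subseteq> minted \<tau> (bc @ bs)"
  by (auto simp: minted_def)

lemma owner_list_ne: "owner_list \<tau> bc \<alpha> \<noteq> [] \<longleftrightarrow> (\<exists>a u. (a, \<alpha>, u) \<in> set (records \<tau> bc))"
  by (auto simp: owner_list_def filter_empty_conv)

lemma inv_rec:
  assumes "inj \<tau>"
  shows "\<forall>a \<beta> u. (a, \<beta>, u) \<in> set (records \<tau> (bc_run \<tau> roy ops t)) \<longrightarrow> \<beta> \<in> minted \<tau> (bc_run \<tau> roy ops t)"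
proof (induction t)
  case 0
  then show ?case by (simp add: records_def)
next
  case (Suc t)
  define bc where "bc = bc_run \<tau> roy ops t"
  have IH: "\<And>a \<beta> u. (a, \<beta>, u) \<in> set (records \<tau> bc) \<Longrightarrow> \<beta> \<in> minted \<tau> bc"
    using Suc bc_def by blast
  have mm: "\<And>b. minted \<tau> bc \<subseteq> minted \<tau> (bc @ [b])" by (rule minted_mono)
  show ?case
  proof (cases "ops t")
    case None
    then have e: "bc_run \<tau> roy ops (Suc t) = bc" using bc_def by simp
    show ?thesis unfolding e using IH by blast
  next
    case (Some r)
    show ?thesis
    proof (cases r)
      case (RMint o' \<alpha>)
      show ?thesis
      proof (intro allI impI)
        fix a \<beta> u
        assume h: "(a, \<beta>, u) \<in> set (records \<tau> (bc_run \<tau> roy ops (Suc t)))"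
        show "\<beta> \<in> minted \<tau> (bc_run \<tau> roy ops (Suc t))"
        proof (cases "owner_list \<tau> bc \<alpha> = []")
          case True
          then have e: "bc_run \<tau> roy ops (Suc t) = bc @ [MintB (\<tau> (o', \<alpha>, Suc t))]"
            using Some RMint bc_def by simp
          from h e have "(a, \<beta>, u) \<in> set (records \<tau> bc) \<or> (a, \<beta>, u) = inv \<tau> (\<tau> (o', \<alpha>, Suc t))"
            by (auto simp add: records_app)
          then show ?thesis
          proof
            assume "(a, \<beta>, u) \<in> set (records \<tau> bc)"
            then have "\<beta> \<in> minted \<tau> bc" by (rule IH)
            then show ?thesis unfolding e by (rule subsetD[OF mm])
          next
            assume q: "(a, \<beta>, u) = inv \<tau> (\<tau> (o', \<alpha>, Suc t))"
            have "MintB (\<tau> (o', \<alpha>, Suc t)) \<in> set (bc @ [MintB (\<tau> (o', \<alpha>, Suc t))])" by simp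
            moreover have "inv \<tau> (\<tau> (o', \<alpha>, Suc t)) = (a, \<beta>, u)" using q by simp
            ultimately have "\<exists>bs a u. MintB bs \<in> set (bc @ [MintB (\<tau> (o', \<alpha>, Suc t))]) \<and> inv \<tau> bs = (a, \<beta>, u)"
              by blast
            then show ?thesis unfolding e minted_def by simp
          qed
        next
          case False
          then have e: "bc_run \<tau> roy ops (Suc t) = bc" using Some RMint bc_def by simp
          show ?thesis using h unfolding e by (rule IH)
        qed
      qed
    next
      case (RTx b s c)
      show ?thesis
      proof (cases "balance bc b \<ge> c")
        case True
        then have e: "bc_run \<tau> roy ops (Suc t) = bc @ [StdB (Tx b s c (Suc t))]"
          using Some RTx bc_def by simp
        have "records \<tau> (bc @ [StdB (Tx b s c (Suc t))]) = records \<tau> bc" by (simp add: records_app)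
        then show ?thesis unfolding e using IH mm by (metis subsetD)
      next
        case False
        then have e: "bc_run \<tau> roy ops (Suc t) = bc" using Some RTx bc_def by simp
        show ?thesis unfolding e using IH by blast
      qed
    next
      case (RTxOr old new \<alpha> c)
      show ?thesis
      proof (cases "chain_owns \<tau> bc old \<alpha> \<and> balance bc new \<ge> c")
        case True
        define B where "B = OwnB (\<tau> (new, \<alpha>, Suc t))
                   [Tx new old (c - roy c) (Suc t), Tx new (orig \<tau> bc \<alpha>) (roy c) (Suc t)]"
        have e: "bc_run \<tau> roy ops (Suc t) = bc @ [B]"
          using True Some RTxOr bc_def B_def by simp
        from True have "owner_list \<tau> bc \<alpha> \<noteq> []" by (simp add: chain_owns_def)
        then obtain a0 u0 where "(a0, \<alpha>, u0) \<in> set (records \<tau> bc)" using owner_list_ne by metis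
        then have "\<alpha> \<in> minted \<tau> bc" by (rule IH)
        then have am: "\<alpha> \<in> minted \<tau> (bc @ [B])" by (rule subsetD[OF mm])
        show ?thesis
        proof (intro allI impI)
          fix a \<beta> u
          assume h: "(a, \<beta>, u) \<in> set (records \<tau> (bc_run \<tau> roy ops (Suc t)))"
          from h e have "(a, \<beta>, u) \<in> set (records \<tau> bc) \<or> (a, \<beta>, u) = inv \<tau> (\<tau> (new, \<alpha>, Suc t))"
            by (auto simp add: records_app B_def)
          then show "\<beta> \<in> minted \<tau> (bc_run \<tau> roy ops (Suc t))"
          proof
            assume "(a, \<beta>, u) \<in> set (records \<tau> bc)"
            then have "\<beta> \<in> minted \<tau> bc" by (rule IH)
            then show ?thesis unfolding e by (rule subsetD[OF mm])
          next
            assume "(a, \<beta>, u) = inv \<tau> (\<tau> (new, \<alpha>, Suc t))"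
            then have "\<beta> = \<alpha>" using assms by (simp add: inv_f_f)
            then show ?thesis using am e by simp
          qed
        qed
      next
        case False
        then have e: "bc_run \<tau> roy ops (Suc t) = bc" using Some RTxOr bc_def by simp
        show ?thesis unfolding e using IH by blast
      qed
    qed
  qed
qed

lemma laws:
  assumes "inj \<tau>"
  shows "ownership_laws (Owns \<tau> roy ops) (Asset_ex \<tau> roy ops)"
  unfolding ownership_laws_def
proof (rule allI, intro conjI)
  fix t
  let ?bc = "bc_run \<tau> roy ops t"
  show "\<forall>\<alpha>\<in>Asset_ex \<tau> roy ops t. \<exists>a. Owns \<tau> roy ops a \<alpha> t"
  proof
    fix \<alpha> assume "\<alpha> \<in> Asset_ex \<tau> roy ops t"
    then obtain bs a u where "MintB bs \<in> set ?bc" "inv \<tau> bs = (a, \<alpha>, u)"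
      by (auto simp: Asset_ex_def minted_def)
    then have "(a, \<alpha>, u) \<in> set (records \<tau> ?bc)" by (force simp: records_def)
    then have "owner_list \<tau> ?bc \<alpha> \<noteq> []" using owner_list_ne by metis
    then show "\<exists>a. Owns \<tau> roy ops a \<alpha> t" by (auto simp: Owns_def chain_owns_def)
  qed
  show "\<forall>\<alpha>\<in>Asset_ex \<tau> roy ops t. \<forall>a b. Owns \<tau> roy ops a \<alpha> t \<and> Owns \<tau> roy ops b \<alpha> t \<longrightarrow> a = b"
    by (auto simp: Owns_def chain_owns_def)
  show "\<forall>\<alpha>. \<alpha> \<notin> Asset_ex \<tau> roy ops t \<longrightarrow> (\<forall>a. \<not> Owns \<tau> roy ops a \<alpha> t)"
  proof (intro allI impI)
    fix \<alpha> a assume "\<alpha> \<notin> Asset_ex \<tau> roy ops t"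
    then have "\<alpha> \<notin> minted \<tau> ?bc" by (simp add: Asset_ex_def)
    then have "owner_list \<tau> ?bc \<alpha> = []" using inv_rec[OF assms] owner_list_ne by metis
    then show "\<not> Owns \<tau> roy ops a \<alpha> t" by (simp add: Owns_def chain_owns_def)
  qed
qed

theorem theorem2:
  fixes \<tau> :: "'ag \<times> 'as \<times> nat \<Rightarrow> bool list"
    and roy :: "real \<Rightarrow> real"
    and ops :: "'w \<Rightarrow> nat \<Rightarrow> ('ag, 'as) request option"
    and RA :: "'ag \<Rightarrow> 'w \<Rightarrow> 'w \<Rightarrow> bool"
    and RN :: "'nd \<Rightarrow> 'w \<Rightarrow> 'w \<Rightarrow> bool"
    and Net :: "'nd set"
    and v :: "'ag \<Rightarrow> 'nd"
    and copy :: "'w \<Rightarrow> 'nd \<Rightarrow> nat \<Rightarrow> 'ag block list"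
    and w0 :: 'w
  assumes tau_inj: "inj \<tau>"
    and veridical_agents: "\<forall>x w. RA x w w"
    and veridical_nodes: "\<forall>n w. RN n w w"
    and nodes_hold_copy: "\<forall>n\<in>Net. \<forall>w w'. RN n w w' \<longrightarrow> copy w' n = copy w n"
    and honest: "w0 \<in> PC RN Net {w. \<forall>n\<in>Net. copy w n = bc_run \<tau> roy (ops w)}"
    and wallet_node: "\<forall>x. v x \<in> Net"
    and wallet_comm: "\<forall>w x a \<alpha> t.
        (w \<in> PC RN Net (tok_fact \<tau> roy ops (\<tau> (a, \<alpha>, t)))
           \<longrightarrow> w \<in> Kn (RA x) (PC RN Net (tok_fact \<tau> roy ops (\<tau> (a, \<alpha>, t))))) \<and>
        (w \<in> Kn (RA x) (tok_fact \<tau> roy ops (\<tau> (a, \<alpha>, t)))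
           \<longrightarrow> w \<in> PC RN Net (Kn (RA x) (tok_fact \<tau> roy ops (\<tau> (a, \<alpha>, t)))))"
  shows "ownership_laws (Owns \<tau> roy (ops w0)) (Asset_ex \<tau> roy (ops w0)) \<and>
         (\<forall>a \<alpha> t. Owns \<tau> roy (ops w0) a \<alpha> t \<longrightarrow>
            w0 \<in> PC RA UNIV (tok_fact \<tau> roy ops (\<tau> (a, \<alpha>, t))))"
proof (intro conjI allI impI)
  show "ownership_laws (Owns \<tau> roy (ops w0)) (Asset_ex \<tau> roy (ops w0))"
    using laws[OF tau_inj] .
next
  fix a \<alpha> t
  assume own: "Owns \<tau> roy (ops w0) a \<alpha> t"
  let ?H = "{w. \<forall>n\<in>Net. copy w n = bc_run \<tau> roy (ops w)}"
  let ?P = "tok_fact \<tau> roy ops (\<tau> (a, \<alpha>, t))"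
  have Peq: "?P = {w. Owns \<tau> roy (ops w) a \<alpha> t}"
    using tau_inj by (simp add: tok_fact_def inv_f_f)
  have hon: "\<And>n m w' w''. n \<in> Net \<Longrightarrow> m \<in> Net \<Longrightarrow> RN n w0 w' \<Longrightarrow> RN m w' w'' \<Longrightarrow> w'' \<in> ?H"
    using honest by (simp add: PC_def Kn_def)
  have netne: "v undefined \<in> Net" using wallet_node by blast
  have w0H: "w0 \<in> ?H" using hon[OF netne netne] veridical_nodes by blast
  have pc: "w0 \<in> PC RN Net ?P"
  proof -
    have "w'' \<in> ?P" if n: "n \<in> Net" and m: "m \<in> Net" and r1: "RN n w0 w'" and r2: "RN m w' w''"
      for n m w' w''
    proof -
      have w'H: "w' \<in> ?H" using hon[OF n m r1] veridical_nodes by blast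
      have w''H: "w'' \<in> ?H" using hon[OF n m r1 r2] .
      have "copy w' n = copy w0 n" using nodes_hold_copy n r1 by blast
      then have e1: "bc_run \<tau> roy (ops w') = bc_run \<tau> roy (ops w0)" using w'H w0H n by simp
      have "copy w'' m = copy w' m" using nodes_hold_copy m r2 by blast
      then have "bc_run \<tau> roy (ops w'') = bc_run \<tau> roy (ops w')" using w'H w''H m by simp
      with e1 have "bc_run \<tau> roy (ops w'') = bc_run \<tau> roy (ops w0)" by simp
      then show ?thesis using own Peq by (simp add: Owns_def)
    qed
    then show ?thesis by (auto simp: PC_def Kn_def)
  qed
  have pcP: "\<And>w. w \<in> PC RN Net ?P \<Longrightarrow> w \<in> ?P"
  proof -
    fix w assume "w \<in> PC RN Net ?P"
    then show "w \<in> ?P" using netne veridical_nodes unfolding PC_def Kn_def by blast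
  qed
  show "w0 \<in> PC RA UNIV ?P"
    unfolding PC_def Kn_def
  proof (intro CollectI ballI allI impI)
    fix x y w' w''
    assume r1: "RA x w0 w'" and r2: "RA y w' w''"
    have wc: "\<forall>w x. w \<in> PC RN Net ?P \<longrightarrow> w \<in> Kn (RA x) (PC RN Net ?P)" using wallet_comm by blast
    have "w0 \<in> Kn (RA x) (PC RN Net ?P)" using wc pc by blast
    then have "w' \<in> PC RN Net ?P" using r1 by (simp add: Kn_def)
    then have "w' \<in> Kn (RA y) (PC RN Net ?P)" using wc by blast
    then have "w'' \<in> PC RN Net ?P" using r2 by (simp add: Kn_def)
    then show "w'' \<in> ?P" using pcP by blast
  qed
qed

end
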